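(* Let $f,g_1,\dots,g_m,h_1,\dots,h_l\in\mathbb{R}[\mathbf{x}]$ with correlative sparsity data $(I_j,J_j,W_j)_{j\in[p]}$ as in the context. Assume that for every $j\in[p]$ there is $R_j>0$ such that $R_j-\|\mathbf{x}(I_j)\|_2^2\in\{g_1,\dots,g_m\}$. Then $(0,\infty)\subseteq Q_k^\circ(g_{J_j})$ for all integers $k\ge k_{\min}$ and all $j\in[p]$. As a consequence, the POP of minimizing $f$ over $S(g)\cap V(h)$ has the constant trace property with correlative sparsity.
   Context: $\mathbf{x}=(x_1,\dots,x_n)$; for $I\subseteq[n]$, $\mathbf{x}(I)=(x_i)_{i\in I}$. $\lceil p\rceil:=\lceil\deg(p)/2\rceil$; $k_{\min}:=\max\{\lceil f\rceil,\lceil g_i\rceil,\lceil h_j\rceil\}$; $S(g)=\{\mathbf{x}:g_i(\mathbf{x})\ge0\}$, $V(h)=\{\mathbf{x}:h_j(\mathbf{x})=0\}$. Sparsity data: $I_1,\dots,I_p\subseteq[n]$ (in the paper, the maximal cliques of a chordal extension of the correlative sparsity pattern graph), $n_j:=|I_j|$; $\{J_j\}_{j\in[p]}$ a partition of $[m]$ and $\{W_j\}_{j\in[p]}$ a partition of $[l]$ such that $g_i\in\mathbb{R}[\mathbf{x}(I_j)]$ for $i\in J_j$ and $h_i\in\mathbb{R}[\mathbf{x}(I_j)]$ for $i\in W_j$; $g_{J_j}:=\{g_i:i\in J_j\}$. $\mathbb{N}^I_d:=\{\alpha\in\mathbb{N}^n:|\alpha|\le d,\ \mathrm{supp}(\alpha)\subseteq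 I\}$, $\mathbf{v}^I_d:=(\mathbf{x}^\alpha)_{\alpha\in\mathbb{N}^I_d}$, of length $s(d,|I|)=\binom{|I|+d}{d}$. $Q_k^\circ(g_{J_j}):=\{(\mathbf{v}^{I_j}_k)^\top\mathbf{G}_0\mathbf{v}^{I_j}_k+\sum_{i\in J_j}g_i(\mathbf{v}^{I_j}_{k-\lceil g_i\rceil})^\top\mathbf{G}_i\mathbf{v}^{I_j}_{k-\lceil g_i\rceil}:\ \mathbf{G}_0,\mathbf{G}_i \text{ real symmetric positive definite}\}$. For $\mathbf{y}=(y_\alpha)_{\alpha\in\mathbb{N}^n_{2k}}$: $\mathbf{M}_d(\mathbf{y},I)=(y_{\alpha+\beta})_{\alpha,\beta\in\mathbb{N}^I_d}$, $\mathbf{M}_d(q\mathbf{y},I)=(\sum_\gamma q_\gamma y_{\alpha+\beta+\gamma})_{\alpha,\beta\in\mathbb{N}^I_d}$ for $q\in\mathbb{R}[\mathbf{x}(I)]$; $\mathbf{D}_k(\mathbf{y},I_j):=\mathrm{diag}(\mathbf{M}_k(\mathbf{y},I_j),(\mathbf{M}_{k-\lceil g_i\rceil}(g_i\mathbf{y},I_j))_{i\in J_j})$. CTP with correlative sparsity: for every integer $k\ge k_{\min}$ and every $j\in[p]$ there exist $a^{(j)}_k>0$ and a positive definite matrix $\mathbf{P}^{(j)}_k$ with the same block-diagonal structure as $\mathbf{D}_k(\mathbf{y},I_j)$ such that every $\mathbf{y}\in\mathbb{R}^{s(2k)}$ with $\mathbf{M}_{k-\lceil h_i\rceil}(h_i\mathbf{y},I_j)=0$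 ($i\in W_j$) and $y_{\mathbf{0}}=1$ satisfies $\mathrm{trace}(\mathbf{P}^{(j)}_k\mathbf{D}_k(\mathbf{y},I_j)\mathbf{P}^{(j)}_k)=a^{(j)}_k$. *)

theory Defs
  imports Complex_Main "HOL-Library.Poly_Mapping"
begin

text \<open>Multivariate real polynomials: finitely supported maps from monomials
(exponent vectors, finitely supported maps nat to nat) to real coefficients.
Variable x_t is indexed by t :: nat; the n variables are x_0,...,x_(n-1).
Multiplication is the convolution product of Poly_Mapping.\<close>

type_synonym monom = "nat \<Rightarrow>\<^sub>0 nat"
type_synonym rpoly = "monom \<Rightarrow>\<^sub>0 real"

definition mdeg :: "monom \<Rightarrow> nat" where
  "mdeg \<alpha> = (\<Sum>i\<in>Poly_Mapping.keys \<alpha>. Poly_Mapping.lookup \<alpha> i)"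

definition pdeg :: "rpoly \<Rightarrow> nat" where
  "pdeg q = (if Poly_Mapping.keys q = {} then 0 else Max (mdeg ` Poly_Mapping.keys q))"

definition hdeg :: "rpoly \<Rightarrow> nat" where
  "hdeg q = (pdeg q + 1) div 2"

definition const :: "real \<Rightarrow> rpoly" where
  "const c = Poly_Mapping.single 0 c"

definition var :: "nat \<Rightarrow> rpoly" where
  "var t = Poly_Mapping.single (Poly_Mapping.single t 1) 1"

definition in_vars :: "nat set \<Rightarrow> rpoly \<Rightarrow> bool" where
  "in_vars I q \<longleftrightarrow> (\<forall>\<alpha>\<in>Poly_Mapping.keys q. Poly_Mapping.keys \<alpha> \<subseteq> I)"

definition mons :: "nat set \<Rightarrow> nat \<Rightarrow> monom set" where
  "mons I d = {\<alpha>. Poly_Mapping.keys \<alpha> \<subseteq> I \<and> mdeg \<alpha> \<le> d}"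

definition posdef :: "'a set \<Rightarrow> ('a \<Rightarrow> 'a \<Rightarrow> real) \<Rightarrow> bool" where
  "posdef B G \<longleftrightarrow> (\<forall>a\<in>B. \<forall>b\<in>B. G a b = G b a) \<and>
     (\<forall>u. (\<exists>a\<in>B. u a \<noteq> 0) \<longrightarrow> (\<Sum>a\<in>B. \<Sum>b\<in>B. u a * G a b * u b) > 0)"

definition gram :: "monom set \<Rightarrow> (monom \<Rightarrow> monom \<Rightarrow> real) \<Rightarrow> rpoly" where
  "gram B G = (\<Sum>\<alpha>\<in>B. \<Sum>\<beta>\<in>B. Poly_Mapping.single (\<alpha> + \<beta>) (G \<alpha> \<beta>))"

definition Qcirc :: "nat \<Rightarrow> nat set \<Rightarrow> (nat \<Rightarrow> rpoly) \<Rightarrow> nat set \<Rightarrow> rpoly set" where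
  "Qcirc k I g J = {q. \<exists>G0 G. posdef (mons I k) G0 \<and>
      (\<forall>i\<in>J. posdef (mons I (k - hdeg (g i))) (G i)) \<and>
      q = gram (mons I k) G0 + (\<Sum>i\<in>J. g i * gram (mons I (k - hdeg (g i))) (G i))}"

definition locmat :: "rpoly \<Rightarrow> (monom \<Rightarrow> real) \<Rightarrow> monom \<Rightarrow> monom \<Rightarrow> real" where
  "locmat q y \<alpha> \<beta> = (\<Sum>\<gamma>\<in>Poly_Mapping.keys q. Poly_Mapping.lookup q \<gamma> * y (\<alpha> + \<beta> + \<gamma>))"

definition trPMP :: "'a set \<Rightarrow> ('a \<Rightarrow> 'a \<Rightarrow> real) \<Rightarrow> ('a \<Rightarrow> 'a \<Rightarrow> real) \<Rightarrow> real" where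
  "trPMP B P M = (\<Sum>a\<in>B. \<Sum>b\<in>B. \<Sum>c\<in>B. P a b * M b c * P c a)"

definition kmin :: "rpoly \<Rightarrow> nat \<Rightarrow> (nat \<Rightarrow> rpoly) \<Rightarrow> nat \<Rightarrow> (nat \<Rightarrow> rpoly) \<Rightarrow> nat" where
  "kmin f m g l h = Max ({hdeg f} \<union> hdeg ` g ` {0..<m} \<union> hdeg ` h ` {0..<l})"

text \<open>The positive definite
block-diagonal matrix P^(j)_k is given by its diagonal blocks P0 (for M_k(y,I_j))
and P i (for M_{k-ceil(g_i)}(g_i y, I_j), i in J_j); the trace of P D P is the
sum of the traces of the blocks. y ranges over all real functions on monomials
(only entries y_alpha with |alpha| <= 2k are ever read).\<close>
definition CTP_cs ::
  "rpoly \<Rightarrow> nat \<Rightarrow> (nat \<Rightarrow> rpoly) \<Rightarrow> nat \<Rightarrow> (nat \<Rightarrow> rpoly) \<Rightarrow> nat \<Rightarrow>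
   (nat \<Rightarrow> nat set) \<Rightarrow> (nat \<Rightarrow> nat set) \<Rightarrow> (nat \<Rightarrow> nat set) \<Rightarrow> bool" where
  "CTP_cs f m g l h p I J W \<longleftrightarrow>
    (\<forall>k\<ge>kmin f m g l h. \<forall>j<p. \<exists>a>0. \<exists>P0 P.
       posdef (mons (I j) k) P0 \<and>
       (\<forall>i\<in>J j. posdef (mons (I j) (k - hdeg (g i))) (P i)) \<and>
       (\<forall>y :: monom \<Rightarrow> real.
          (\<forall>i\<in>W j. \<forall>\<alpha>\<in>mons (I j) (k - hdeg (h i)). \<forall>\<beta>\<in>mons (I j) (k - hdeg (h i)).
              locmat (h i) y \<alpha> \<beta> = 0) \<and> y 0 = 1 \<longrightarrow>
          trPMP (mons (I j) k) P0 (locmat 1 y) +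
          (\<Sum>i\<in>J j. trPMP (mons (I j) (k - hdeg (g i))) (P i) (locmat (g i) y)) = a))"

end

theory Submission
  imports Defs
begin



lemma poly_sum_monos: "(p::rpoly) = (\<Sum>\<gamma>\<in>Poly_Mapping.keys p. Poly_Mapping.single \<gamma> (Poly_Mapping.lookup p \<gamma>))"
  by (rule poly_mapping_eqI) (auto simp: lookup_sum lookup_single when_def in_keys_iff)

lemma mdeg_sum: "finite S \<Longrightarrow> Poly_Mapping.keys \<alpha> \<subseteq> S \<Longrightarrow> mdeg \<alpha> = (\<Sum>i\<in>S. Poly_Mapping.lookup \<alpha> i)"
  unfolding mdeg_def by (rule sum.mono_neutral_left) (auto simp: in_keys_iff)

lemma mdeg_add: "mdeg (a + b) = mdeg a + mdeg b"
proof -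
  let ?S = "Poly_Mapping.keys a \<union> Poly_Mapping.keys b"
  have "mdeg (a+b) = (\<Sum>i\<in>?S. Poly_Mapping.lookup (a+b) i)"
    by (rule mdeg_sum) (auto dest: set_mp[OF keys_add])
  also have "\<dots> = (\<Sum>i\<in>?S. Poly_Mapping.lookup a i) + (\<Sum>i\<in>?S. Poly_Mapping.lookup b i)"
    by (simp add: lookup_add sum.distrib)
  also have "\<dots> = mdeg a + mdeg b" using mdeg_sum[of ?S a] mdeg_sum[of ?S b] by simp
  finally show ?thesis .
qed

lemma mdeg_zero[simp]: "mdeg 0 = 0" by (simp add: mdeg_def)
lemma mdeg_single[simp]: "mdeg (Poly_Mapping.single t n) = n" by (simp add: mdeg_def)

lemma keys_add_nat: "Poly_Mapping.keys ((a::monom) + b) = Poly_Mapping.keys a \<union> Poly_Mapping.keys b"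
  by (auto simp: in_keys_iff lookup_add)

lemma mdeg_eq0: "mdeg \<alpha> = 0 \<Longrightarrow> \<alpha> = 0"
  unfolding mdeg_def by (rule poly_mapping_eqI) (auto simp: in_keys_iff)

lemma split_off: assumes "t \<in> Poly_Mapping.keys (\<gamma>::monom)"
  shows "\<exists>\<gamma>'. \<gamma> = \<gamma>' + Poly_Mapping.single t 1"
proof -
  have "\<gamma> = (\<gamma> - Poly_Mapping.single t 1) + Poly_Mapping.single t 1"
    using assms by (intro poly_mapping_eqI) (auto simp: lookup_add lookup_minus lookup_single when_def in_keys_iff)
  then show ?thesis by blast
qed

lemma split_mon: "mdeg (\<gamma>::monom) \<le> a + b \<Longrightarrow> \<exists>\<gamma>1 \<gamma>2. \<gamma> = \<gamma>1 + \<gamma>2 \<and> mdeg \<gamma>1 \<le> a \<and> mdeg \<gamma>2 \<le> b"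
proof (induction "mdeg \<gamma>" arbitrary: \<gamma> a b)
  case 0
  then show ?case by (intro exI[of _ 0]) (auto dest: mdeg_eq0)
next
  case (Suc x)
  note hyp = Suc
  then have "\<gamma> \<noteq> 0" by auto
  then obtain t where "t \<in> Poly_Mapping.keys \<gamma>" by (metis keys_eq_empty all_not_in_conv)
  then obtain \<gamma>' where g: "\<gamma> = \<gamma>' + Poly_Mapping.single t 1" using split_off by blast
  have d: "mdeg \<gamma>' = x" using Suc(2) g by (simp add: mdeg_add)
  show ?case
  proof (cases a)
    case 0
    then obtain b' where b: "b = Suc b'" using Suc by (cases b) auto
    obtain g1 g2 where "\<gamma>' = g1 + g2" "mdeg g1 \<le> a" "mdeg g2 \<le> b'"
      using Suc(1)[OF d[symmetric], of a b'] d Suc(2,3) b g by (auto simp: mdeg_add)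
    then show ?thesis using g b by (intro exI[of _ g1] exI[of _ "g2 + Poly_Mapping.single t 1"]) (auto simp: mdeg_add add.assoc)
  next
    case (Suc a')
    obtain g1 g2 where "\<gamma>' = g1 + g2" "mdeg g1 \<le> a'" "mdeg g2 \<le> b"
      using hyp(1)[OF d[symmetric], of a' b] d hyp(2,3) Suc g by (auto simp: mdeg_add)
    then show ?thesis using g \<open>a = Suc a'\<close> by (intro exI[of _ "g1 + Poly_Mapping.single t 1"] exI[of _ g2]) (auto simp: mdeg_add ac_simps)
  qed
qed

lemma finite_mons: "finite I \<Longrightarrow> finite (mons I d)"
proof -
  assume I: "finite I"
  have "Poly_Mapping.lookup ` mons I d \<subseteq> {f. \<forall>x. (x \<in> I \<longrightarrow> f x \<in> {0..d}) \<and> (x \<notin> I \<longrightarrow> f x = 0)}"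
  proof clarify
    fix \<alpha> x assume a: "\<alpha> \<in> mons I d"
    show "(x \<in> I \<longrightarrow> Poly_Mapping.lookup \<alpha> x \<in> {0..d}) \<and> (x \<notin> I \<longrightarrow> Poly_Mapping.lookup \<alpha> x = 0)"
    proof (intro conjI impI)
      assume "x \<in> I"
      have "Poly_Mapping.lookup \<alpha> x \<le> mdeg \<alpha>"
      proof (cases "x \<in> Poly_Mapping.keys \<alpha>")
        case True then show ?thesis unfolding mdeg_def by (intro member_le_sum) auto
      qed (simp add: in_keys_iff)
      then show "Poly_Mapping.lookup \<alpha> x \<in> {0..d}" using a by (auto simp: mons_def)
    next
      assume "x \<notin> I" then show "Poly_Mapping.lookup \<alpha> x = 0" using a by (auto simp: mons_def in_keys_iff)
    qed
  qed
  then have "finite (Poly_Mapping.lookup ` mons I d)"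
    by (rule finite_subset) (intro finite_set_of_finite_funs I, simp)
  then show ?thesis by (rule finite_imageD) (auto simp: inj_on_def)
qed




definition mm :: "'a set \<Rightarrow> ('a \<Rightarrow> 'a \<Rightarrow> real) \<Rightarrow> ('a \<Rightarrow> 'a \<Rightarrow> real) \<Rightarrow> 'a \<Rightarrow> 'a \<Rightarrow> real" where
  "mm B X Y a b = (\<Sum>c\<in>B. X a c * Y c b)"

definition nrm :: "'a set \<Rightarrow> ('a \<Rightarrow> 'a \<Rightarrow> real) \<Rightarrow> real" where
  "nrm B X = (\<Sum>a\<in>B. \<Sum>b\<in>B. \<bar>X a b\<bar>)"

definition diagm :: "('a \<Rightarrow> real) \<Rightarrow> 'a \<Rightarrow> 'a \<Rightarrow> real" where
  "diagm s a b = (if a = b then s a else 0)"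

lemma nrm_nonneg: "nrm B X \<ge> 0"
  unfolding nrm_def by (intro sum_nonneg) auto

lemma entry_le_nrm: "finite B \<Longrightarrow> a \<in> B \<Longrightarrow> b \<in> B \<Longrightarrow> \<bar>X a b\<bar> \<le> nrm B X"
proof -
  assume B: "finite B" "a \<in> B" "b \<in> B"
  have "\<bar>X a b\<bar> \<le> (\<Sum>b\<in>B. \<bar>X a b\<bar>)" using B by (intro member_le_sum) auto
  also have "\<dots> \<le> nrm B X" unfolding nrm_def using B
    by (intro member_le_sum[where f="\<lambda>a. \<Sum>b\<in>B. \<bar>X a b\<bar>"]) (auto intro: sum_nonneg)
  finally show ?thesis .
qed

lemma nrm_mm: assumes "finite B" shows "nrm B (mm B X Y) \<le> nrm B X * nrm B Y"
proof -
  have "nrm B (mm B X Y) \<le> (\<Sum>a\<in>B. \<Sum>b\<in>B. \<Sum>c\<in>B. \<bar>X a c\<bar> * \<bar>Y c b\<bar>)"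
    unfolding nrm_def mm_def
    by (intro sum_mono) (auto intro: order.trans[OF sum_abs] simp: abs_mult)
  also have "\<dots> = (\<Sum>a\<in>B. \<Sum>c\<in>B. \<Sum>b\<in>B. \<bar>X a c\<bar> * \<bar>Y c b\<bar>)"
    by (intro sum.cong refl sum.swap)
  also have "\<dots> = (\<Sum>a\<in>B. \<Sum>c\<in>B. \<bar>X a c\<bar> * (\<Sum>b\<in>B. \<bar>Y c b\<bar>))"
    by (simp add: sum_distrib_left)
  also have "\<dots> \<le> (\<Sum>a\<in>B. \<Sum>c\<in>B. \<bar>X a c\<bar> * nrm B Y)"
  proof (intro sum_mono mult_left_mono)
    fix c assume "c \<in> B"
    then show "(\<Sum>b\<in>B. \<bar>Y c b\<bar>) \<le> nrm B Y" unfolding nrm_def using assms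
      by (intro member_le_sum[where f="\<lambda>a. \<Sum>b\<in>B. \<bar>Y a b\<bar>"]) (auto intro: sum_nonneg)
  qed auto
  also have "\<dots> = nrm B X * nrm B Y" unfolding nrm_def by (simp add: sum_distrib_right)
  finally show ?thesis .
qed

lemma abs_prod_le: "\<bar>(x::real) * y\<bar> \<le> x^2 + y^2"
proof -
  have "0 \<le> (\<bar>x\<bar> - \<bar>y\<bar>)^2" by simp
  then have "2 * (\<bar>x\<bar> * \<bar>y\<bar>) \<le> x^2 + y^2" by (simp add: power2_eq_square algebra_simps)
  moreover have "\<bar>x\<bar> * \<bar>y\<bar> \<ge> 0" by simp
  ultimately have "\<bar>x\<bar> * \<bar>y\<bar> \<le> x^2 + y^2" by linarith
  then show ?thesis by (simp add: abs_mult)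
qed

lemma quad_bound: assumes "finite B"
  shows "\<bar>\<Sum>a\<in>B. \<Sum>b\<in>B. u a * X a b * u b\<bar> \<le> nrm B X * (\<Sum>a\<in>B. (u a)^2)"
proof -
  let ?U = "\<Sum>a\<in>B. (u a)^2"
  have uu: "\<bar>u a * u b\<bar> \<le> ?U" if "a \<in> B" "b \<in> B" for a b
  proof (cases "a = b")
    case True
    then show ?thesis using that assms by (auto simp: power2_eq_square[symmetric] abs_mult intro!: member_le_sum)
  next
    case False
    have "(\<Sum>c\<in>{a,b}. (u c)^2) \<le> ?U" using that assms by (intro sum_mono2) auto
    then show ?thesis using False abs_prod_le[of "u a" "u b"] by simp
  qed
  have "\<bar>\<Sum>a\<in>B. \<Sum>b\<in>B. u a * X a b * u b\<bar> \<le> (\<Sum>a\<in>B. \<Sum>b\<in>B. \<bar>X a b\<bar> * ?U)"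
  proof (intro order.trans[OF sum_abs] sum_mono order.trans[OF sum_abs])
    fix a b assume ab: "a \<in> B" "b \<in> B"
    have "\<bar>u a * X a b * u b\<bar> = \<bar>X a b\<bar> * \<bar>u a * u b\<bar>" by (simp add: abs_mult)
    also have "\<dots> \<le> \<bar>X a b\<bar> * ?U" using uu[OF ab] by (intro mult_left_mono) auto
    finally show "\<bar>u a * X a b * u b\<bar> \<le> \<bar>X a b\<bar> * ?U" .
  qed
  also have "\<dots> = nrm B X * ?U" unfolding nrm_def by (simp add: sum_distrib_right)
  finally show ?thesis .
qed




lemma quad_diag: "finite B \<Longrightarrow> (\<Sum>a\<in>B. \<Sum>b\<in>B. u a * diagm s a b * u b) = (\<Sum>a\<in>B. s a * (u a)^2)"
proof -
  assume B: "finite B"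
  have "(\<Sum>b\<in>B. u a * diagm s a b * u b) = (if a \<in> B then s a * (u a)^2 else 0)" for a
  proof -
    have "(\<Sum>b\<in>B. u a * diagm s a b * u b) = (\<Sum>b\<in>B. if a = b then s a * (u a)^2 else 0)"
      by (intro sum.cong) (auto simp: diagm_def power2_eq_square)
    then show ?thesis using B by simp
  qed
  then show ?thesis by simp
qed

lemma posdef_diag: assumes "finite B" "\<forall>a\<in>B. s a > 0" shows "posdef B (diagm s)"
  unfolding posdef_def
proof (intro conjI allI impI ballI)
  fix a b show "diagm s a b = diagm s b a" by (auto simp: diagm_def)
next
  fix u :: "'a \<Rightarrow> real" assume "\<exists>a\<in>B. u a \<noteq> 0"
  then obtain a where a: "a \<in> B" "u a \<noteq> 0" by blast
  have "0 < (\<Sum>a\<in>B. s a * (u a)^2)"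
    using assms a by (intro sum_pos2[of B a]) auto
  then show "0 < (\<Sum>a\<in>B. \<Sum>b\<in>B. u a * diagm s a b * u b)" using quad_diag[OF assms(1)] by simp
qed

lemma mm_diag_left: "finite B \<Longrightarrow> a \<in> B \<Longrightarrow> (\<Sum>c\<in>B. diagm s a c * Y c b) = s a * Y a b"
  by (simp add: diagm_def if_distrib[of "\<lambda>x. x * _"] cong: if_cong)

lemma mm_diag_right: "finite B \<Longrightarrow> b \<in> B \<Longrightarrow> (\<Sum>c\<in>B. X a c * diagm s c b) = X a b * s b"
proof -
  assume "finite B" "b \<in> B"
  have "(\<Sum>c\<in>B. X a c * diagm s c b) = (\<Sum>c\<in>B. if c = b then X a c * s c else 0)"
    by (intro sum.cong) (auto simp: diagm_def)
  then show ?thesis using \<open>finite B\<close> \<open>b \<in> B\<close> by (simp add: sum.delta')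
qed

lemma mm_diag_diag: "finite B \<Longrightarrow> a \<in> B \<Longrightarrow> mm B (diagm s) (diagm s) a b = diagm (\<lambda>a. (s a)^2) a b"
  by (simp add: mm_def mm_diag_left) (simp add: diagm_def power2_eq_square)

lemma posdef_sq: assumes fin: "finite B" and P: "posdef B P" shows "posdef B (mm B P P)"
  unfolding posdef_def
proof (intro conjI allI impI ballI)
  have sym: "\<And>a b. a \<in> B \<Longrightarrow> b \<in> B \<Longrightarrow> P a b = P b a" using P by (auto simp: posdef_def)
  fix a b assume "a \<in> B" "b \<in> B"
  then show "mm B P P a b = mm B P P b a" unfolding mm_def
    by (intro sum.cong) (auto simp: sym mult.commute)
next
  have sym: "\<And>a b. a \<in> B \<Longrightarrow> b \<in> B \<Longrightarrow> P a b = P b a" using P by (auto simp: posdef_def)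
  fix u :: "'a \<Rightarrow> real" assume u: "\<exists>a\<in>B. u a \<noteq> 0"
  define v where "v c = (\<Sum>a\<in>B. u a * P a c)" for c
  have "(\<Sum>a\<in>B. \<Sum>b\<in>B. u a * mm B P P a b * u b) = (\<Sum>a\<in>B. \<Sum>b\<in>B. \<Sum>c\<in>B. u a * P a c * (P c b * u b))"
    unfolding mm_def by (simp add: sum_distrib_left sum_distrib_right mult.assoc)
  also have "\<dots> = (\<Sum>a\<in>B. \<Sum>c\<in>B. \<Sum>b\<in>B. u a * P a c * (P c b * u b))"
    by (intro sum.cong refl sum.swap)
  also have "\<dots> = (\<Sum>c\<in>B. \<Sum>a\<in>B. \<Sum>b\<in>B. u a * P a c * (P c b * u b))"
    by (rule sum.swap)
  also have "\<dots> = (\<Sum>c\<in>B. v c * v c)"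
  proof (intro sum.cong refl)
    fix c assume c: "c \<in> B"
    have "v c = (\<Sum>b\<in>B. P c b * u b)" unfolding v_def using c by (intro sum.cong) (auto simp: sym)
    moreover have "(\<Sum>a\<in>B. \<Sum>b\<in>B. u a * P a c * (P c b * u b)) = (\<Sum>a\<in>B. u a * P a c) * (\<Sum>b\<in>B. P c b * u b)"
      by (simp add: sum_product)
    ultimately show "(\<Sum>a\<in>B. \<Sum>b\<in>B. u a * P a c * (P c b * u b)) = v c * v c"
      by (simp add: v_def)
  qed
  finally have eq: "(\<Sum>a\<in>B. \<Sum>b\<in>B. u a * mm B P P a b * u b) = (\<Sum>c\<in>B. v c * v c)" .
  show "0 < (\<Sum>a\<in>B. \<Sum>b\<in>B. u a * mm B P P a b * u b)"
  proof (cases "\<exists>c\<in>B. v c \<noteq> 0")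
    case True
    then obtain c where "c \<in> B" "v c \<noteq> 0" by blast
    then have "0 < (\<Sum>c\<in>B. v c * v c)" using fin by (intro sum_pos2[of B c]) (auto simp: zero_less_mult_iff)
    then show ?thesis using eq by simp
  next
    case False
    have "0 < (\<Sum>a\<in>B. \<Sum>b\<in>B. u a * P a b * u b)" using P u by (auto simp: posdef_def)
    also have "(\<Sum>a\<in>B. \<Sum>b\<in>B. u a * P a b * u b) = (\<Sum>b\<in>B. v b * u b)"
      unfolding v_def by (subst sum.swap) (simp add: sum_distrib_right)
    also have "\<dots> = 0" using False by simp
    finally show ?thesis by simp
  qed
qed




lemma nrm_le_div: assumes "K > 0" "\<forall>a\<in>B. \<forall>b\<in>B. \<bar>X a b\<bar> \<le> \<bar>Y a b\<bar> / K"
  shows "nrm B X \<le> nrm B Y / K"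
proof -
  have "nrm B X \<le> (\<Sum>a\<in>B. \<Sum>b\<in>B. \<bar>Y a b\<bar> / K)" unfolding nrm_def using assms by (intro sum_mono) auto
  also have "\<dots> = nrm B Y / K" unfolding nrm_def by (simp add: sum_divide_distrib)
  finally show ?thesis .
qed

lemma nrm_add: "nrm B (\<lambda>a b. X a b + Y a b) \<le> nrm B X + nrm B Y"
  unfolding nrm_def by (simp add: sum.distrib[symmetric] sum_mono abs_triangle_ineq)

lemma sqrt_pert:
  fixes B :: "'a set" and s :: "'a \<Rightarrow> real" and E :: "'a \<Rightarrow> 'a \<Rightarrow> real"
  assumes fin: "finite B" and m: "m > 0" and s: "\<forall>a\<in>B. s a \<ge> m"
    and Esym: "\<forall>a b. E a b = E b a" and En: "nrm B E \<le> m^2/2"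
  shows "\<exists>P. (\<forall>a b. P a b = P b a) \<and> posdef B P \<and>
     (\<forall>a\<in>B. \<forall>b\<in>B. mm B P P a b = diagm (\<lambda>a. (s a)^2) a b - E a b)"
proof -
  define \<Phi> where "\<Phi> F = (\<lambda>a b. if a \<in> B \<and> b \<in> B then (- E a b - mm B F F a b) / (s a + s b) else 0)"
    for F :: "'a \<Rightarrow> 'a \<Rightarrow> real"
  define Fs where "Fs n = (\<Phi> ^^ n) (\<lambda>a b. 0)" for n
  have Fs_Suc: "Fs (Suc n) = \<Phi> (Fs n)" for n by (simp add: Fs_def)
  have spos: "a \<in> B \<Longrightarrow> b \<in> B \<Longrightarrow> s a + s b \<ge> 2 * m" for a b using s[rule_format, of a] s[rule_format, of b] by linarith
  have Phi_bound: "\<bar>\<Phi> F a b\<bar> \<le> \<bar>X a b\<bar> / (2*m)" if "a \<in> B" "b \<in> B"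
    "X a b = - E a b - mm B F F a b" for F X a b
  proof -
    have "\<bar>\<Phi> F a b\<bar> = \<bar>X a b\<bar> / (s a + s b)" using that spos[OF that(1,2)] m by (simp add: \<Phi>_def)
    also have "\<dots> \<le> \<bar>X a b\<bar> / (2*m)" using spos[OF that(1,2)] m by (intro divide_left_mono) auto
    finally show ?thesis .
  qed
  have nrm_Phi: "nrm B (\<Phi> F) \<le> m/2" if "nrm B F \<le> m/2" for F
  proof -
    have "nrm B (\<Phi> F) \<le> nrm B (\<lambda>a b. - E a b - mm B F F a b) / (2*m)"
      using m by (intro nrm_le_div) (auto intro: Phi_bound)
    also have "nrm B (\<lambda>a b. - E a b - mm B F F a b) \<le> nrm B E + nrm B F * nrm B F"
    proof -
      have "nrm B (\<lambda>a b. - E a b - mm B F F a b) \<le> nrm B (\<lambda>a b. - E a b) + nrm B (\<lambda>a b. - mm B F F a b)"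
        using nrm_add[of B "\<lambda>a b. - E a b" "\<lambda>a b. - mm B F F a b"] by simp
      also have "\<dots> = nrm B E + nrm B (mm B F F)" by (simp add: nrm_def)
      finally show ?thesis using nrm_mm[OF fin, of F F] by simp
    qed
    also have "nrm B F * nrm B F \<le> (m/2) * (m/2)" using that nrm_nonneg[of B F] by (intro mult_mono) auto
    finally have "nrm B (\<Phi> F) \<le> (nrm B E + (m/2)*(m/2)) / (2*m)" using m by (simp add: divide_right_mono)
    also have "\<dots> \<le> (m^2/2 + (m/2)*(m/2)) / (2*m)" using En m by (intro divide_right_mono) auto
    also have "\<dots> \<le> m/2" using m by (simp add: power2_eq_square field_simps)
    finally show ?thesis .
  qed
  have contr: "nrm B (\<lambda>a b. \<Phi> F a b - \<Phi> G a b) \<le> nrm B (\<lambda>a b. F a b - G a b) / 2"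
    if "nrm B F \<le> m/2" "nrm B G \<le> m/2" for F G
  proof -
    let ?D = "\<lambda>a b. F a b - G a b"
    have eq: "\<Phi> F a b - \<Phi> G a b = (if a \<in> B \<and> b \<in> B then (- (mm B F ?D a b + mm B ?D G a b)) / (s a + s b) else 0)" for a b
    proof -
      have "mm B F F a b - mm B G G a b = mm B F ?D a b + mm B ?D G a b"
        unfolding mm_def by (simp add: sum.distrib[symmetric] sum_subtractf[symmetric] algebra_simps)
      then show ?thesis by (simp add: \<Phi>_def diff_divide_distrib[symmetric])
    qed
    have "nrm B (\<lambda>a b. \<Phi> F a b - \<Phi> G a b) \<le> nrm B (\<lambda>a b. mm B F ?D a b + mm B ?D G a b) / (2*m)"
    proof (intro nrm_le_div ballI)
      fix a b assume ab: "a \<in> B" "b \<in> B"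
      have "\<bar>\<Phi> F a b - \<Phi> G a b\<bar> = \<bar>mm B F ?D a b + mm B ?D G a b\<bar> / (s a + s b)"
        using ab spos[OF ab] m by (simp add: eq)
      also have "\<dots> \<le> \<bar>mm B F ?D a b + mm B ?D G a b\<bar> / (2*m)" using spos[OF ab] m by (intro divide_left_mono) auto
      finally show "\<bar>\<Phi> F a b - \<Phi> G a b\<bar> \<le> \<bar>mm B F ?D a b + mm B ?D G a b\<bar> / (2*m)" .
    qed (use m in auto)
    also have "nrm B (\<lambda>a b. mm B F ?D a b + mm B ?D G a b) \<le> nrm B F * nrm B ?D + nrm B ?D * nrm B G"
      using nrm_add[of B "mm B F ?D" "mm B ?D G"] nrm_mm[OF fin, of F ?D] nrm_mm[OF fin, of ?D G] by linarith
    also have "\<dots> \<le> (m/2) * nrm B ?D + nrm B ?D * (m/2)"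
      using that nrm_nonneg[of B ?D] by (intro add_mono mult_right_mono mult_left_mono) auto
    finally have "nrm B (\<lambda>a b. \<Phi> F a b - \<Phi> G a b) \<le> ((m/2) * nrm B ?D + nrm B ?D * (m/2)) / (2*m)"
      using m by (simp add: divide_right_mono)
    also have "\<dots> = nrm B ?D / 2" using m by (simp add: field_simps)
    finally show ?thesis .
  qed
  have bnd: "nrm B (Fs n) \<le> m/2" for n
  proof (induction n)
    case 0 then show ?case using m by (simp add: Fs_def nrm_def)
  next
    case (Suc n) then show ?case unfolding Fs_Suc by (rule nrm_Phi)
  qed
  have dif: "nrm B (\<lambda>a b. Fs (Suc n) a b - Fs n a b) \<le> (1/2)^n * (m/2)" for n
  proof (induction n)
    case 0 then show ?case using bnd[of 1] by (simp add: Fs_def)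
  next
    case (Suc n)
    have "nrm B (\<lambda>a b. Fs (Suc (Suc n)) a b - Fs (Suc n) a b) \<le> nrm B (\<lambda>a b. Fs (Suc n) a b - Fs n a b) / 2"
      using contr[OF bnd[of "Suc n"] bnd[of n]] by (simp only: Fs_Suc[of "Suc n"] Fs_Suc[of n])
    then show ?case using Suc by simp
  qed
  have out: "\<not> (a \<in> B \<and> b \<in> B) \<Longrightarrow> Fs n a b = 0" for n a b
    by (cases n) (auto simp: Fs_Suc \<Phi>_def Fs_def)
  have entry: "\<bar>Fs (Suc n) a b - Fs n a b\<bar> \<le> (1/2)^n * (m/2)" for n a b
  proof (cases "a \<in> B \<and> b \<in> B")
    case True then show ?thesis using entry_le_nrm[OF fin, of a b "\<lambda>a b. Fs (Suc n) a b - Fs n a b"] dif[of n] by auto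
  next
    case False then show ?thesis using out[OF False] m by simp
  qed
  define F where "F a b = suminf (\<lambda>i. Fs (Suc i) a b - Fs i a b)" for a b
  have summ: "summable (\<lambda>i. Fs (Suc i) a b - Fs i a b)" for a b
    by (rule summable_comparison_test'[where g="\<lambda>i. (1/2)^i * (m/2)"])
       (use entry in \<open>auto intro: summable_mult2\<close>)
  have lim: "(\<lambda>n. Fs n a b) \<longlonglongrightarrow> F a b" for a b
  proof -
    have "(\<lambda>n. \<Sum>i<n. Fs (Suc i) a b - Fs i a b) \<longlonglongrightarrow> F a b" unfolding F_def by (rule summable_LIMSEQ[OF summ])
    moreover have "(\<Sum>i<n. Fs (Suc i) a b - Fs i a b) = Fs n a b" for n
      by (subst sum_lessThan_telescope) (simp add: Fs_def)
    ultimately show ?thesis by simp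
  qed
  have fix_: "\<Phi> F a b = F a b" for a b
  proof -
    have "(\<lambda>n. \<Phi> (Fs n) a b) \<longlonglongrightarrow> \<Phi> F a b"
      unfolding \<Phi>_def mm_def using spos[of a b] m by (cases "a \<in> B \<and> b \<in> B") (auto intro!: tendsto_intros lim)
    moreover have "(\<lambda>n. \<Phi> (Fs n) a b) \<longlonglongrightarrow> F a b"
      using LIMSEQ_Suc[OF lim[of a b]] by (simp add: Fs_Suc)
    ultimately show ?thesis by (rule LIMSEQ_unique)
  qed
  have nrmF: "nrm B F \<le> m/2"
  proof (rule LIMSEQ_le_const2)
    show "(\<lambda>n. nrm B (Fs n)) \<longlonglongrightarrow> nrm B F" unfolding nrm_def by (auto intro!: tendsto_intros lim)
  qed (use bnd in auto)
  have symFs: "Fs n a b = Fs n b a" for n a b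
  proof (induction n arbitrary: a b)
    case 0 then show ?case by (simp add: Fs_def)
  next
    case (Suc n)
    have "mm B (Fs n) (Fs n) a b = mm B (Fs n) (Fs n) b a"
      unfolding mm_def by (intro sum.cong) (auto simp: Suc mult.commute)
    then show ?case by (auto simp: Fs_Suc \<Phi>_def Esym add.commute)
  qed
  have symF: "F a b = F b a" for a b using symFs by (simp add: F_def)
  define P where "P a b = diagm s a b + F a b" for a b
  have symP: "\<forall>a b. P a b = P b a" by (auto simp: P_def diagm_def symF)
  have sq: "mm B P P a b = diagm (\<lambda>a. (s a)^2) a b - E a b" if ab: "a \<in> B" "b \<in> B" for a b
  proof -
    have "mm B P P a b = (\<Sum>c\<in>B. diagm s a c * diagm s c b) + (\<Sum>c\<in>B. diagm s a c * F c b)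
        + (\<Sum>c\<in>B. F a c * diagm s c b) + mm B F F a b"
      unfolding mm_def P_def by (simp add: sum.distrib[symmetric] algebra_simps)
    also have "\<dots> = s a * diagm s a b + s a * F a b + F a b * s b + mm B F F a b"
      using fin ab by (simp add: mm_diag_left mm_diag_right)
    also have "F a b * (s a + s b) = - E a b - mm B F F a b"
    proof -
      have "F a b = (- E a b - mm B F F a b) / (s a + s b)" using fix_[of a b] ab by (simp add: \<Phi>_def)
      then show ?thesis using spos[OF ab] m by (simp add: field_simps)
    qed
    then have "s a * diagm s a b + s a * F a b + F a b * s b + mm B F F a b = s a * diagm s a b - E a b"
      by (simp add: algebra_simps)
    also have "s a * diagm s a b = diagm (\<lambda>a. (s a)^2) a b" by (simp add: diagm_def power2_eq_square)
    finally show ?thesis .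
  qed
  have pd: "posdef B P"
    unfolding posdef_def
  proof (intro conjI ballI allI impI)
    fix a b show "P a b = P b a" using symP by simp
  next
    fix u :: "'a \<Rightarrow> real" assume "\<exists>a\<in>B. u a \<noteq> 0"
    then obtain a where a: "a \<in> B" "u a \<noteq> 0" by blast
    let ?U = "\<Sum>a\<in>B. (u a)^2"
    have Upos: "?U > 0" using a fin by (intro sum_pos2[of B a]) auto
    have "(\<Sum>a\<in>B. \<Sum>b\<in>B. u a * P a b * u b) = (\<Sum>a\<in>B. \<Sum>b\<in>B. u a * diagm s a b * u b) + (\<Sum>a\<in>B. \<Sum>b\<in>B. u a * F a b * u b)"
      unfolding P_def by (simp add: sum.distrib[symmetric] algebra_simps)
    also have "(\<Sum>a\<in>B. \<Sum>b\<in>B. u a * diagm s a b * u b) = (\<Sum>a\<in>B. s a * (u a)^2)" by (rule quad_diag[OF fin])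
    finally have eq: "(\<Sum>a\<in>B. \<Sum>b\<in>B. u a * P a b * u b) = (\<Sum>a\<in>B. s a * (u a)^2) + (\<Sum>a\<in>B. \<Sum>b\<in>B. u a * F a b * u b)" .
    have "(\<Sum>a\<in>B. s a * (u a)^2) \<ge> (\<Sum>a\<in>B. m * (u a)^2)" using s by (intro sum_mono mult_right_mono) auto
    then have l1: "(\<Sum>a\<in>B. s a * (u a)^2) \<ge> m * ?U" by (simp add: sum_distrib_left)
    have "\<bar>\<Sum>a\<in>B. \<Sum>b\<in>B. u a * F a b * u b\<bar> \<le> nrm B F * ?U" by (rule quad_bound[OF fin])
    also have "\<dots> \<le> (m/2) * ?U" using nrmF Upos by (intro mult_right_mono) auto
    finally have l2: "\<bar>\<Sum>a\<in>B. \<Sum>b\<in>B. u a * F a b * u b\<bar> \<le> (m/2) * ?U" .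
    have "0 < (m/2) * ?U" using m Upos by simp
    then show "0 < (\<Sum>a\<in>B. \<Sum>b\<in>B. u a * P a b * u b)" using eq l1 l2 by linarith
  qed
  show ?thesis using symP pd sq by blast
qed




lemma single_sum: "Poly_Mapping.single k (\<Sum>i\<in>S. f i) = (\<Sum>i\<in>S. Poly_Mapping.single k (f i))"
  by (induction S rule: infinite_finite_induct) (auto simp: single_add)

lemma gram_cong: "(\<forall>a\<in>B. \<forall>b\<in>B. G a b = G' a b) \<Longrightarrow> gram B G = gram B G'"
  unfolding gram_def by (intro sum.cong) auto

lemma gram_diff: "gram B (\<lambda>a b. X a b - Y a b) = gram B X - gram B Y"
  unfolding gram_def by (simp add: single_diff sum_subtractf)

lemma gram_add: "gram B (\<lambda>a b. X a b + Y a b) = gram B X + gram B Y"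
  unfolding gram_def by (simp add: single_add sum.distrib)

lemma gram_scale: "gram B (\<lambda>a b. d * X a b) = Poly_Mapping.single 0 d * gram B X"
  unfolding gram_def by (simp add: sum_distrib_left mult_single)

lemma gram_diag: "finite B \<Longrightarrow> gram B (diagm s) = (\<Sum>a\<in>B. Poly_Mapping.single (a + a) (s a))"
proof -
  assume B: "finite B"
  have "(\<Sum>b\<in>B. Poly_Mapping.single (a + b) (diagm s a b)) = (if a \<in> B then Poly_Mapping.single (a + a) (s a) else 0)" for a
  proof -
    have "(\<Sum>b\<in>B. Poly_Mapping.single (a + b) (diagm s a b)) = (\<Sum>b\<in>B. if a = b then Poly_Mapping.single (a + a) (s a) else 0)"
      by (intro sum.cong) (auto simp: diagm_def)
    then show ?thesis using B by simp
  qed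
  then show ?thesis unfolding gram_def by simp
qed

definition rep :: "monom set \<Rightarrow> rpoly \<Rightarrow> bool" where
  "rep B q \<longleftrightarrow> (\<exists>E. (\<forall>a b. E a b = E b a) \<and> gram B E = q)"

lemma rep_zero: "rep B 0"
  unfolding rep_def by (intro exI[of _ "\<lambda>a b. 0"]) (simp add: gram_def)

lemma rep_add: "rep B p \<Longrightarrow> rep B q \<Longrightarrow> rep B (p + q)"
proof -
  assume "rep B p" "rep B q"
  then obtain E1 E2 where "\<forall>a b. E1 a b = E1 b a" "gram B E1 = p" "\<forall>a b. E2 a b = E2 b a" "gram B E2 = q"
    unfolding rep_def by blast
  then show ?thesis unfolding rep_def by (intro exI[of _ "\<lambda>a b. E1 a b + E2 a b"]) (simp add: gram_add)
qed

lemma rep_sum: "(\<And>i. i \<in> S \<Longrightarrow> rep B (f i)) \<Longrightarrow> rep B (\<Sum>i\<in>S. f i)"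
  by (induction S rule: infinite_finite_induct) (auto intro: rep_zero rep_add)

lemma gram_point: assumes fin: "finite B" and xz: "x \<in> B" "z \<in> B"
  shows "gram B (\<lambda>a b. if a = x \<and> b = z then v else 0) = Poly_Mapping.single (x + z) v"
proof -
  have inner: "(\<Sum>b\<in>B. Poly_Mapping.single (a + b) (if a = x \<and> b = z then v else 0)) =
       (if a = x then Poly_Mapping.single (x + z) v else 0)" for a
  proof -
    have "(\<Sum>b\<in>B. Poly_Mapping.single (a + b) (if a = x \<and> b = z then v else 0)) =
         (\<Sum>b\<in>B. if b = z then (if a = x then Poly_Mapping.single (x + z) v else 0) else 0)"
      by (intro sum.cong) auto
    also have "\<dots> = (if a = x then Poly_Mapping.single (x + z) v else 0)"
      by (simp only: sum.delta[OF fin] xz if_True)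
    finally show ?thesis .
  qed
  have "gram B (\<lambda>a b. if a = x \<and> b = z then v else 0) = (\<Sum>a\<in>B. if a = x then Poly_Mapping.single (x + z) v else 0)"
    unfolding gram_def inner by (rule refl)
  also have "\<dots> = Poly_Mapping.single (x + z) v"
    by (simp only: sum.delta[OF fin] xz if_True)
  finally show ?thesis .
qed

lemma rep_single: assumes fin: "finite B" and g: "g1 \<in> B" "g2 \<in> B"
  shows "rep B (Poly_Mapping.single (g1 + g2) v)"
proof -
  define e where "e a b = (if a = g1 \<and> b = g2 then v/2 else 0)" for a b
  define E where "E a b = e a b + e b a" for a b
  have sym: "\<forall>a b. E a b = E b a" by (simp add: E_def add.commute)
  have e2: "(\<lambda>a b. e b a) = (\<lambda>a b. if a = g2 \<and> b = g1 then v/2 else 0)"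
    by (intro ext) (simp add: e_def conj_commute)
  have "gram B E = gram B (\<lambda>a b. if a = g1 \<and> b = g2 then v/2 else 0) + gram B (\<lambda>a b. if a = g2 \<and> b = g1 then v/2 else 0)"
    unfolding E_def gram_add e2[symmetric] by (simp only: e_def)
  also have "\<dots> = Poly_Mapping.single (g1 + g2) (v/2) + Poly_Mapping.single (g2 + g1) (v/2)"
    by (simp only: gram_point[OF fin g] gram_point[OF fin g(2) g(1)])
  also have "\<dots> = Poly_Mapping.single (g1 + g2) (v/2 + v/2)"
    by (simp only: add.commute[of g2 g1] single_add)
  also have "\<dots> = Poly_Mapping.single (g1 + g2) v" by simp
  finally show ?thesis using sym unfolding rep_def by blast
qed

definition Ly :: "(monom \<Rightarrow> real) \<Rightarrow> rpoly \<Rightarrow> real" where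
  "Ly y p = (\<Sum>\<delta>\<in>Poly_Mapping.keys p. Poly_Mapping.lookup p \<delta> * y \<delta>)"

lemma Ly_eq: "finite S \<Longrightarrow> Poly_Mapping.keys p \<subseteq> S \<Longrightarrow> Ly y p = (\<Sum>\<delta>\<in>S. Poly_Mapping.lookup p \<delta> * y \<delta>)"
  unfolding Ly_def by (rule sum.mono_neutral_left) (auto simp: in_keys_iff)

lemma Ly_add: "Ly y (p + q) = Ly y p + Ly y q"
proof -
  let ?S = "Poly_Mapping.keys p \<union> Poly_Mapping.keys q"
  have "Ly y (p + q) = (\<Sum>\<delta>\<in>?S. Poly_Mapping.lookup (p+q) \<delta> * y \<delta>)"
    by (rule Ly_eq) (auto dest: set_mp[OF keys_add])
  also have "\<dots> = (\<Sum>\<delta>\<in>?S. Poly_Mapping.lookup p \<delta> * y \<delta>) + (\<Sum>\<delta>\<in>?S. Poly_Mapping.lookup q \<delta> * y \<delta>)"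
    by (simp add: lookup_add sum.distrib algebra_simps)
  also have "\<dots> = Ly y p + Ly y q" using Ly_eq[of ?S p y] Ly_eq[of ?S q y] by simp
  finally show ?thesis .
qed

lemma Ly_zero[simp]: "Ly y 0 = 0" by (simp add: Ly_def)

lemma Ly_sum: "Ly y (\<Sum>i\<in>S. f i) = (\<Sum>i\<in>S. Ly y (f i))"
  by (induction S rule: infinite_finite_induct) (auto simp: Ly_add)

lemma Ly_single[simp]: "Ly y (Poly_Mapping.single \<delta> v) = v * y \<delta>"
  by (simp add: Ly_def)

lemma trace_Ly: assumes fin: "finite B" and sym: "\<forall>a\<in>B. \<forall>b\<in>B. P a b = P b a"
  shows "trPMP B P (locmat q y) = Ly y (q * gram B (mm B P P))"
proof -
  let ?K = "Poly_Mapping.keys q"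
  let ?l = "Poly_Mapping.lookup q"
  have "q * gram B (mm B P P) = (\<Sum>\<gamma>\<in>?K. Poly_Mapping.single \<gamma> (?l \<gamma>)) * gram B (mm B P P)"
    by (subst poly_sum_monos[of q]) simp
  also have "\<dots> = (\<Sum>\<gamma>\<in>?K. \<Sum>b\<in>B. \<Sum>c\<in>B. Poly_Mapping.single (\<gamma> + (b + c)) (?l \<gamma> * mm B P P b c))"
    unfolding gram_def sum_distrib_right by (simp only: sum_distrib_left mult_single)
  also have "\<dots> = (\<Sum>b\<in>B. \<Sum>\<gamma>\<in>?K. \<Sum>c\<in>B. Poly_Mapping.single (\<gamma> + (b + c)) (?l \<gamma> * mm B P P b c))"
    by (rule sum.swap)
  also have "\<dots> = (\<Sum>b\<in>B. \<Sum>c\<in>B. \<Sum>\<gamma>\<in>?K. Poly_Mapping.single (\<gamma> + (b + c)) (?l \<gamma> * mm B P P b c))"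
    by (intro sum.cong refl sum.swap)
  finally have "Ly y (q * gram B (mm B P P)) = (\<Sum>b\<in>B. \<Sum>c\<in>B. \<Sum>\<gamma>\<in>?K. ?l \<gamma> * mm B P P b c * y (\<gamma> + (b + c)))"
    by (simp add: Ly_sum)
  also have "\<dots> = (\<Sum>b\<in>B. \<Sum>c\<in>B. \<Sum>\<gamma>\<in>?K. \<Sum>a\<in>B. P a b * (?l \<gamma> * y (b + c + \<gamma>)) * P c a)"
  proof (intro sum.cong refl)
    fix \<gamma> b c assume b: "b \<in> B" and c: "c \<in> B"
    have "?l \<gamma> * mm B P P b c * y (\<gamma> + (b + c)) = (\<Sum>a\<in>B. P b a * P a c * (?l \<gamma> * y (\<gamma> + (b + c))))"
      unfolding mm_def by (simp add: sum_distrib_left sum_distrib_right algebra_simps)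
    also have "\<dots> = (\<Sum>a\<in>B. P a b * (?l \<gamma> * y (b + c + \<gamma>)) * P c a)"
    proof (intro sum.cong refl)
      fix a assume a: "a \<in> B"
      have 1: "P b a = P a b" "P a c = P c a" using sym a b c by auto
      have 2: "\<gamma> + (b + c) = b + c + \<gamma>" by (simp add: add.commute)
      show "P b a * P a c * (?l \<gamma> * y (\<gamma> + (b + c))) = P a b * (?l \<gamma> * y (b + c + \<gamma>)) * P c a"
        unfolding 1 2 by (simp only: mult_ac)
    qed
    finally show "?l \<gamma> * mm B P P b c * y (\<gamma> + (b + c)) = (\<Sum>a\<in>B. P a b * (?l \<gamma> * y (b + c + \<gamma>)) * P c a)" .
  qed
  also have "\<dots> = (\<Sum>b\<in>B. \<Sum>c\<in>B. \<Sum>a\<in>B. \<Sum>\<gamma>\<in>?K. P a b * (?l \<gamma> * y (b + c + \<gamma>)) * P c a)"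
    by (intro sum.cong refl sum.swap)
  also have "\<dots> = (\<Sum>b\<in>B. \<Sum>a\<in>B. \<Sum>c\<in>B. \<Sum>\<gamma>\<in>?K. P a b * (?l \<gamma> * y (b + c + \<gamma>)) * P c a)"
    by (intro sum.cong refl sum.swap)
  also have "\<dots> = (\<Sum>a\<in>B. \<Sum>b\<in>B. \<Sum>c\<in>B. \<Sum>\<gamma>\<in>?K. P a b * (?l \<gamma> * y (b + c + \<gamma>)) * P c a)"
    by (rule sum.swap)
  also have "\<dots> = trPMP B P (locmat q y)"
    unfolding trPMP_def locmat_def by (intro sum.cong refl) (simp add: sum_distrib_left sum_distrib_right)
  finally show ?thesis by simp
qed




lemma single2: "Poly_Mapping.single t (1::nat) + Poly_Mapping.single t 1 = Poly_Mapping.single t 2"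
  by (simp only: single_add[symmetric] one_add_one)

lemma var_sq: "(var t)^2 = Poly_Mapping.single (Poly_Mapping.single t 2) 1"
  unfolding var_def power2_eq_square mult_single single2 by simp

lemma single2_nz: "Poly_Mapping.single t (2::nat) \<noteq> 0"
  by (metis lookup_single_eq lookup_zero zero_neq_numeral)

lemma single_inj2: "Poly_Mapping.single s (2::nat) = Poly_Mapping.single t 2 \<longleftrightarrow> s = t"
proof
  assume "Poly_Mapping.single s (2::nat) = Poly_Mapping.single t 2"
  then have "Poly_Mapping.lookup (Poly_Mapping.single s (2::nat)) s = Poly_Mapping.lookup (Poly_Mapping.single t 2) s" by simp
  then show "s = t" by (auto simp: lookup_single when_def split: if_splits)
qed simp

lemma lookup_ball: assumes "finite I" "t \<in> I"
  shows "Poly_Mapping.lookup (const R - (\<Sum>s\<in>I. (var s)^2)) (Poly_Mapping.single t 2) = -1"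
proof -
  have "Poly_Mapping.lookup (\<Sum>s\<in>I. (var s)^2) (Poly_Mapping.single t 2) = (\<Sum>s\<in>I. if s = t then 1 else 0)"
    by (simp add: lookup_sum var_sq lookup_single when_def single_inj2)
  also have "\<dots> = 1" using assms by simp
  finally show ?thesis
    using single2_nz[of t] by (simp add: lookup_minus const_def lookup_single when_def)
qed

lemma keys_ball: "Poly_Mapping.keys (const R - (\<Sum>s\<in>I. (var s)^2)) \<subseteq> insert 0 ((\<lambda>t. Poly_Mapping.single t 2) ` I)"
proof -
  have "Poly_Mapping.keys (\<Sum>s\<in>I. (var s)^2) \<subseteq> (\<Union>s\<in>I. Poly_Mapping.keys ((var s)^2))" by (rule keys_sum)
  also have "\<dots> \<subseteq> (\<lambda>t. Poly_Mapping.single t 2) ` I" by (auto simp: var_sq)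
  finally show ?thesis using keys_diff[of "const R" "\<Sum>s\<in>I. (var s)^2"]
    by (auto simp: const_def split: if_splits)
qed

lemma pdeg_ball: assumes "finite I" "I \<noteq> {}"
  shows "pdeg (const R - (\<Sum>s\<in>I. (var s)^2)) = 2"
proof -
  let ?g = "const R - (\<Sum>s\<in>I. (var s)^2)"
  obtain t where t: "t \<in> I" using assms by auto
  have tk: "Poly_Mapping.single t 2 \<in> Poly_Mapping.keys ?g" using lookup_ball[OF assms(1) t, of R] by (simp add: in_keys_iff)
  have "Max (mdeg ` Poly_Mapping.keys ?g) = 2"
  proof (rule Max_eqI)
    show "finite (mdeg ` Poly_Mapping.keys ?g)" by simp
    show "2 \<in> mdeg ` Poly_Mapping.keys ?g" using tk by (metis image_eqI mdeg_single)
    fix y assume "y \<in> mdeg ` Poly_Mapping.keys ?g"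
    then show "y \<le> 2" using keys_ball[of R I] by auto
  qed
  then show ?thesis using tk unfolding pdeg_def by auto
qed

lemma hdeg_ball: "finite I \<Longrightarrow> I \<noteq> {} \<Longrightarrow> hdeg (const R - (\<Sum>s\<in>I. (var s)^2)) = 1"
  by (simp add: hdeg_def pdeg_ball)

lemma ball_vars: assumes "finite I" "in_vars I' (const R - (\<Sum>s\<in>I. (var s)^2))" shows "I \<subseteq> I'"
proof
  fix t assume t: "t \<in> I"
  have "Poly_Mapping.single t 2 \<in> Poly_Mapping.keys (const R - (\<Sum>s\<in>I. (var s)^2))"
    using lookup_ball[OF assms(1) t, of R] by (simp add: in_keys_iff)
  then show "t \<in> I'" using assms(2) unfolding in_vars_def by auto
qed




lemma sum_if_eq: "finite B \<Longrightarrow> x \<in> B \<Longrightarrow> (\<Sum>a\<in>B. if a = x then f a else 0) = f x"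
  by (simp add: sum.delta')

lemma ball_ident:
  fixes I :: "nat set" and B B1 :: "monom set" and w :: "monom \<Rightarrow> real" and R c :: real
  assumes finI: "finite I" and finB: "finite B" and sub: "B1 \<subseteq> B" and z: "0 \<in> B"
    and cl: "\<forall>\<beta>\<in>B1. \<forall>t\<in>I. \<beta> + Poly_Mapping.single t 1 \<in> B"
  defines "d \<equiv> \<lambda>\<alpha>. (if \<alpha> = 0 then c else 0) - (if \<alpha> \<in> B1 then R * w \<alpha> else 0)
      + (\<Sum>t\<in>I. \<Sum>\<beta>\<in>B1. if \<beta> + Poly_Mapping.single t 1 = \<alpha> then w \<beta> else 0)"
  shows "gram B (diagm d) + (const R - (\<Sum>t\<in>I. (var t)^2)) * gram B1 (diagm w) = const c"
proof -
  have finB1: "finite B1" using finB sub by (rule finite_subset[rotated])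
  let ?e = "\<lambda>t. Poly_Mapping.single t (1::nat)"
  define T2 where "T2 = (\<Sum>\<alpha>\<in>B1. Poly_Mapping.single (\<alpha> + \<alpha>) (R * w \<alpha>))"
  define T3 where "T3 = (\<Sum>t\<in>I. \<Sum>\<beta>\<in>B1. Poly_Mapping.single (Poly_Mapping.single t 2 + (\<beta> + \<beta>)) (w \<beta>))"
  have "gram B (diagm d) = (\<Sum>\<alpha>\<in>B. Poly_Mapping.single (\<alpha> + \<alpha>) (d \<alpha>))" by (rule gram_diag[OF finB])
  also have "\<dots> = (\<Sum>\<alpha>\<in>B. Poly_Mapping.single (\<alpha> + \<alpha>) (if \<alpha> = 0 then c else 0))
     - (\<Sum>\<alpha>\<in>B. Poly_Mapping.single (\<alpha> + \<alpha>) (if \<alpha> \<in> B1 then R * w \<alpha> else 0))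
     + (\<Sum>\<alpha>\<in>B. Poly_Mapping.single (\<alpha> + \<alpha>) (\<Sum>t\<in>I. \<Sum>\<beta>\<in>B1. if \<beta> + ?e t = \<alpha> then w \<beta> else 0))"
    unfolding d_def by (simp only: single_add single_diff sum.distrib sum_subtractf)
  also have "(\<Sum>\<alpha>\<in>B. Poly_Mapping.single (\<alpha> + \<alpha>) (if \<alpha> = 0 then c else 0)) = const c"
  proof -
    have "(\<Sum>\<alpha>\<in>B. Poly_Mapping.single (\<alpha> + \<alpha>) (if \<alpha> = 0 then c else 0)) = (\<Sum>\<alpha>\<in>B. if \<alpha> = 0 then const c else 0)"
      by (intro sum.cong) (auto simp: const_def)
    also have "\<dots> = const c" using finB z by (rule sum_if_eq)
    finally show ?thesis .
  qed
  also have "(\<Sum>\<alpha>\<in>B. Poly_Mapping.single (\<alpha> + \<alpha>) (if \<alpha> \<in> B1 then R * w \<alpha> else 0)) = T2"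
    unfolding T2_def by (rule sum.mono_neutral_cong_right[OF finB sub]) auto
  also have "(\<Sum>\<alpha>\<in>B. Poly_Mapping.single (\<alpha> + \<alpha>) (\<Sum>t\<in>I. \<Sum>\<beta>\<in>B1. if \<beta> + ?e t = \<alpha> then w \<beta> else 0)) = T3"
  proof -
    have "(\<Sum>\<alpha>\<in>B. Poly_Mapping.single (\<alpha> + \<alpha>) (\<Sum>t\<in>I. \<Sum>\<beta>\<in>B1. if \<beta> + ?e t = \<alpha> then w \<beta> else 0))
       = (\<Sum>\<alpha>\<in>B. \<Sum>t\<in>I. \<Sum>\<beta>\<in>B1. if \<alpha> = \<beta> + ?e t then Poly_Mapping.single (\<alpha> + \<alpha>) (w \<beta>) else 0)"
      by (simp only: single_sum) (intro sum.cong refl, auto)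
    also have "\<dots> = (\<Sum>t\<in>I. \<Sum>\<beta>\<in>B1. \<Sum>\<alpha>\<in>B. if \<alpha> = \<beta> + ?e t then Poly_Mapping.single (\<alpha> + \<alpha>) (w \<beta>) else 0)"
      by (subst sum.swap) (intro sum.cong refl sum.swap)
    also have "\<dots> = (\<Sum>t\<in>I. \<Sum>\<beta>\<in>B1. Poly_Mapping.single ((\<beta> + ?e t) + (\<beta> + ?e t)) (w \<beta>))"
    proof (intro sum.cong refl)
      fix t \<beta> assume "t \<in> I" "\<beta> \<in> B1"
      then have bt: "\<beta> + ?e t \<in> B" using cl by auto
      show "(\<Sum>\<alpha>\<in>B. if \<alpha> = \<beta> + ?e t then Poly_Mapping.single (\<alpha> + \<alpha>) (w \<beta>) else 0)
          = Poly_Mapping.single ((\<beta> + ?e t) + (\<beta> + ?e t)) (w \<beta>)"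
        using sum_if_eq[OF finB bt, of "\<lambda>\<alpha>. Poly_Mapping.single (\<alpha> + \<alpha>) (w \<beta>)"] by simp
    qed
    also have "\<dots> = T3" unfolding T3_def
    proof (intro sum.cong refl)
      fix t :: nat and \<beta> :: monom
      have "(\<beta> + ?e t) + (\<beta> + ?e t) = (?e t + ?e t) + (\<beta> + \<beta>)" by (simp add: ac_simps)
      then show "Poly_Mapping.single ((\<beta> + ?e t) + (\<beta> + ?e t)) (w \<beta>) = Poly_Mapping.single (Poly_Mapping.single t 2 + (\<beta> + \<beta>)) (w \<beta>)"
        by (simp only: single2)
    qed
    finally show ?thesis .
  qed
  finally have 1: "gram B (diagm d) = const c - T2 + T3" .
  have "(const R - (\<Sum>t\<in>I. (var t)^2)) * gram B1 (diagm w)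
      = const R * (\<Sum>\<beta>\<in>B1. Poly_Mapping.single (\<beta> + \<beta>) (w \<beta>)) - (\<Sum>t\<in>I. (var t)^2 * (\<Sum>\<beta>\<in>B1. Poly_Mapping.single (\<beta> + \<beta>) (w \<beta>)))"
    by (simp only: gram_diag[OF finB1] left_diff_distrib sum_distrib_right)
  also have "\<dots> = T2 - T3"
    unfolding T2_def T3_def const_def var_sq by (simp only: sum_distrib_left mult_single add_0 mult_1)
  finally show ?thesis using 1 by simp
qed




lemma ball_pos:
  fixes I :: "nat set" and k k1 :: nat and R c :: real
  assumes finI: "finite I" and R: "R > 0" and c: "c > 0" and kk: "I \<noteq> {} \<Longrightarrow> Suc k1 = k"
  defines "w \<equiv> \<lambda>\<beta>. c / (2*R) * (1 / (2*R)) ^ mdeg \<beta>"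
  defines "d \<equiv> \<lambda>\<alpha>. (if \<alpha> = 0 then c else 0) - (if \<alpha> \<in> mons I k1 then R * w \<alpha> else 0)
      + (\<Sum>t\<in>I. \<Sum>\<beta>\<in>mons I k1. if \<beta> + Poly_Mapping.single t 1 = \<alpha> then w \<beta> else 0)"
  shows "\<forall>\<alpha>\<in>mons I k. d \<alpha> > 0"
proof
  fix \<alpha> assume a: "\<alpha> \<in> mons I k"
  have wpos: "w \<beta> > 0" for \<beta> using R c by (simp add: w_def)
  let ?S = "\<Sum>t\<in>I. \<Sum>\<beta>\<in>mons I k1. if \<beta> + Poly_Mapping.single t 1 = \<alpha> then w \<beta> else 0"
  have Snn: "?S \<ge> 0" using wpos by (intro sum_nonneg) (auto intro: less_imp_le)
  have M: "(if \<alpha> \<in> mons I k1 then R * w \<alpha> else 0) \<le> R * w \<alpha>" using R wpos[of \<alpha>] by auto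
  show "d \<alpha> > 0"
  proof (cases "\<alpha> = 0")
    case True
    have "R * w \<alpha> = c / 2" using True R by (simp add: w_def)
    then show ?thesis using True Snn M c unfolding d_def by simp
  next
    case False
    then obtain t where t: "t \<in> Poly_Mapping.keys \<alpha>" by (metis keys_eq_empty all_not_in_conv)
    then obtain \<beta> where b: "\<alpha> = \<beta> + Poly_Mapping.single t 1" using split_off by blast
    have tI: "t \<in> I" using t a by (auto simp: mons_def)
    then have k: "Suc k1 = k" using kk by auto
    have bm: "\<beta> \<in> mons I k1" using a b k by (auto simp: mons_def keys_add_nat mdeg_add)
    have "w \<beta> = (if \<beta> + Poly_Mapping.single t 1 = \<alpha> then w \<beta> else 0)" using b by simp
    also have "\<dots> \<le> (\<Sum>\<beta>\<in>mons I k1. if \<beta> + Poly_Mapping.single t 1 = \<alpha> then w \<beta> else 0)"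
      using bm finI wpos by (intro member_le_sum[where f="\<lambda>\<beta>. if \<beta> + Poly_Mapping.single t 1 = \<alpha> then w \<beta> else 0"])
         (auto simp: finite_mons intro: less_imp_le)
    also have "\<dots> \<le> ?S"
      using tI finI wpos by (intro member_le_sum[where f="\<lambda>t. \<Sum>\<beta>\<in>mons I k1. if \<beta> + Poly_Mapping.single t 1 = \<alpha> then w \<beta> else 0"])
         (auto intro!: sum_nonneg simp: less_imp_le)
    finally have Sge: "w \<beta> \<le> ?S" .
    have "R * w \<alpha> = w \<beta> / 2" using b R by (simp add: w_def mdeg_add field_simps)
    then show ?thesis using False Sge M wpos[of \<beta>] unfolding d_def by simp
  qed
qed




lemma mdeg_le_pdeg: "\<gamma> \<in> Poly_Mapping.keys q \<Longrightarrow> mdeg \<gamma> \<le> pdeg q"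
  unfolding pdeg_def by (auto intro!: Max_ge)

lemma rep_term:
  fixes I :: "nat set" and q :: rpoly and k :: nat
  assumes finI: "finite I" and hk: "hdeg q \<le> k" and qv: "in_vars I q"
  shows "rep (mons I k) (q * gram (mons I (k - hdeg q)) (diagm (\<lambda>_. 1)))"
proof -
  let ?B = "mons I k" and ?Bq = "mons I (k - hdeg q)" and ?h = "hdeg q"
  have finB: "finite ?B" and finBq: "finite ?Bq" using finI by (auto simp: finite_mons)
  have "q * gram ?Bq (diagm (\<lambda>_. 1)) =
      (\<Sum>\<gamma>\<in>Poly_Mapping.keys q. Poly_Mapping.single \<gamma> (Poly_Mapping.lookup q \<gamma>)) * (\<Sum>\<beta>\<in>?Bq. Poly_Mapping.single (\<beta> + \<beta>) 1)"
    by (simp only: gram_diag[OF finBq] poly_sum_monos[of q, symmetric])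
  also have "\<dots> = (\<Sum>\<gamma>\<in>Poly_Mapping.keys q. \<Sum>\<beta>\<in>?Bq. Poly_Mapping.single (\<gamma> + (\<beta> + \<beta>)) (Poly_Mapping.lookup q \<gamma>))"
    by (simp only: sum_distrib_left sum_distrib_right mult_single mult_1_right) (rule sum.swap)
  finally have eq: "q * gram ?Bq (diagm (\<lambda>_. 1)) = \<dots>" .
  show ?thesis unfolding eq
  proof (intro rep_sum)
    fix \<gamma> \<beta> assume g: "\<gamma> \<in> Poly_Mapping.keys q" and b: "\<beta> \<in> ?Bq"
    have "mdeg \<gamma> \<le> ?h + ?h" using mdeg_le_pdeg[OF g] by (simp add: hdeg_def)
    then obtain g1 g2 where gs: "\<gamma> = g1 + g2" "mdeg g1 \<le> ?h" "mdeg g2 \<le> ?h" using split_mon by blast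
    have kg: "Poly_Mapping.keys \<gamma> \<subseteq> I" using qv g by (auto simp: in_vars_def)
    have bk: "Poly_Mapping.keys \<beta> \<subseteq> I" "mdeg \<beta> \<le> k - ?h" using b by (auto simp: mons_def)
    have m1: "g1 + \<beta> \<in> ?B" using gs kg bk hk by (auto simp: mons_def keys_add_nat mdeg_add)
    have m2: "g2 + \<beta> \<in> ?B" using gs kg bk hk by (auto simp: mons_def keys_add_nat mdeg_add)
    have "\<gamma> + (\<beta> + \<beta>) = (g1 + \<beta>) + (g2 + \<beta>)" using gs by (simp add: ac_simps)
    then show "rep ?B (Poly_Mapping.single (\<gamma> + (\<beta> + \<beta>)) (Poly_Mapping.lookup q \<gamma>))"
      using rep_single[OF finB m1 m2] by simp
  qed
qed


lemma main_rep:
  fixes I J :: "nat set" and g :: "nat \<Rightarrow> rpoly" and k :: nat and c R :: real and i0 :: nat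
  assumes finI: "finite I" and finJ: "finite J" and i0: "i0 \<in> J" and R: "R > 0" and c: "c > 0"
    and gi0: "g i0 = const R - (\<Sum>t\<in>I. (var t)^2)"
    and hd: "\<forall>i\<in>J. hdeg (g i) \<le> k"
    and gl: "\<forall>i\<in>J. in_vars I (g i)"
  shows "\<exists>P0 P. posdef (mons I k) P0 \<and> (\<forall>i\<in>J. posdef (mons I (k - hdeg (g i))) (P i)) \<and>
     gram (mons I k) (mm (mons I k) P0 P0) +
     (\<Sum>i\<in>J. g i * gram (mons I (k - hdeg (g i))) (mm (mons I (k - hdeg (g i))) (P i) (P i))) = const c"
proof -
  define B where "B = mons I k"
  define k1 where "k1 = k - hdeg (g i0)"
  define B1 where "B1 = mons I k1"
  have finB: "finite B" and finB1: "finite B1" using finI by (auto simp: B_def B1_def finite_mons)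
  have kk: "Suc k1 = k" if "I \<noteq> {}"
    using hdeg_ball[OF finI that, of R] hd i0 gi0 unfolding k1_def by auto
  define w where "w = (\<lambda>\<beta>::monom. c / (2*R) * (1 / (2*R)) ^ mdeg \<beta>)"
  define d where "d = (\<lambda>\<alpha>. (if \<alpha> = 0 then c else 0) - (if \<alpha> \<in> mons I k1 then R * w \<alpha> else 0)
      + (\<Sum>t\<in>I. \<Sum>\<beta>\<in>mons I k1. if \<beta> + Poly_Mapping.single t 1 = \<alpha> then w \<beta> else 0))"
  have dpos: "\<forall>\<alpha>\<in>B. d \<alpha> > 0"
    using ball_pos[OF finI R c kk] unfolding d_def w_def B_def by simp
  have wpos: "w \<beta> > 0" for \<beta> using R c by (simp add: w_def)
  have sub: "B1 \<subseteq> B" unfolding B1_def B_def mons_def k1_def by auto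
  have z: "0 \<in> B" unfolding B_def mons_def by simp
  have cl: "\<forall>\<beta>\<in>B1. \<forall>t\<in>I. \<beta> + Poly_Mapping.single t 1 \<in> B"
  proof (intro ballI)
    fix \<beta> t assume b: "\<beta> \<in> B1" and t: "t \<in> I"
    then have "Suc k1 = k" using kk by auto
    then show "\<beta> + Poly_Mapping.single t 1 \<in> B" using b t unfolding B_def B1_def mons_def
      by (auto simp: keys_add_nat mdeg_add)
  qed
  have ident: "gram B (diagm d) + g i0 * gram B1 (diagm w) = const c"
    unfolding gi0 d_def B1_def using ball_ident[OF finI finB sub[unfolded B1_def] z cl[unfolded B1_def], of c R w] by simp
  define s where "s = (\<lambda>\<alpha>. sqrt (d \<alpha>))"
  define m where "m = Min (s ` B)"
  have Bne: "B \<noteq> {}" using z by auto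
  have mpos: "m > 0" unfolding m_def using finB Bne dpos by (auto simp: Min_gr_iff s_def)
  have sge: "\<forall>a\<in>B. s a \<ge> m" unfolding m_def using finB by auto
  define q1 where "q1 = (\<Sum>i\<in>J - {i0}. g i * gram (mons I (k - hdeg (g i))) (diagm (\<lambda>_. 1)))"
  have "rep B q1" unfolding q1_def B_def
    using hd gl finI by (intro rep_sum rep_term) auto
  then obtain E1 where E1s: "\<forall>a b. E1 a b = E1 b a" and E1g: "gram B E1 = q1" unfolding rep_def by blast
  define \<delta> where "\<delta> = m^2 / (2 * (nrm B E1 + 1))"
  have N0: "nrm B E1 \<ge> 0" by (rule nrm_nonneg)
  have \<delta>pos: "\<delta> > 0" unfolding \<delta>_def using mpos N0 by (simp add: add_pos_nonneg)
  define E where "E = (\<lambda>a b. \<delta> * E1 a b)"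
  have Es: "\<forall>a b. E a b = E b a" using E1s by (simp add: E_def)
  have "nrm B E = \<delta> * nrm B E1" unfolding E_def nrm_def using \<delta>pos by (simp add: abs_mult sum_distrib_left)
  also have "\<dots> \<le> m^2 / 2"
  proof -
    have "\<delta> * nrm B E1 = m^2/2 * (nrm B E1 / (nrm B E1 + 1))" unfolding \<delta>_def using N0 by (simp add: field_simps)
    also have "\<dots> \<le> m^2/2 * 1" using N0 by (intro mult_left_mono) auto
    finally show ?thesis by simp
  qed
  finally have En: "nrm B E \<le> m^2/2" .
  obtain P0 where P0s: "\<forall>a b. P0 a b = P0 b a" and P0pd: "posdef B P0"
    and P0sq: "\<forall>a\<in>B. \<forall>b\<in>B. mm B P0 P0 a b = diagm (\<lambda>a. (s a)^2) a b - E a b"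
    using sqrt_pert[OF finB mpos sge Es En] by blast
  define P where "P = (\<lambda>i. if i = i0 then diagm (\<lambda>\<beta>. sqrt (w \<beta>)) else diagm (\<lambda>_::monom. sqrt \<delta>))"
  have g0: "gram B (mm B P0 P0) = gram B (diagm d) - Poly_Mapping.single 0 \<delta> * q1"
  proof -
    have "gram B (mm B P0 P0) = gram B (\<lambda>a b. diagm d a b - E a b)"
    proof (rule gram_cong, intro ballI)
      fix a b assume a: "a \<in> B" and b: "b \<in> B"
      have "diagm (\<lambda>a. (s a)^2) a b = diagm d a b" using dpos a by (auto simp: diagm_def s_def less_imp_le)
      then show "mm B P0 P0 a b = diagm d a b - E a b" using P0sq a b by simp
    qed
    also have "\<dots> = gram B (diagm d) - gram B E" by (rule gram_diff)
    also have "gram B E = Poly_Mapping.single 0 \<delta> * q1" unfolding E_def gram_scale E1g ..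
    finally show ?thesis .
  qed
  have gi: "gram (mons I (k - hdeg (g i))) (mm (mons I (k - hdeg (g i))) (P i) (P i))
     = Poly_Mapping.single 0 \<delta> * gram (mons I (k - hdeg (g i))) (diagm (\<lambda>_. 1))" if "i \<noteq> i0" for i
  proof -
    let ?Bi = "mons I (k - hdeg (g i))"
    have "gram ?Bi (mm ?Bi (P i) (P i)) = gram ?Bi (\<lambda>a b. \<delta> * diagm (\<lambda>_. 1) a b)"
    proof (rule gram_cong, intro ballI)
      fix a b assume a: "a \<in> ?Bi"
      show "mm ?Bi (P i) (P i) a b = \<delta> * diagm (\<lambda>_. 1) a b"
        using that mm_diag_diag[OF finite_mons[OF finI] a, of "\<lambda>_. sqrt \<delta>" b] \<delta>pos
        by (simp add: P_def diagm_def)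
    qed
    then show ?thesis by (simp only: gram_scale)
  qed
  have gw: "gram B1 (mm B1 (P i0) (P i0)) = gram B1 (diagm w)"
  proof (rule gram_cong, intro ballI)
    fix a b assume a: "a \<in> B1"
    show "mm B1 (P i0) (P i0) a b = diagm w a b"
      using mm_diag_diag[OF finB1 a, of "\<lambda>\<beta>. sqrt (w \<beta>)" b] wpos[of a]
      by (auto simp: P_def diagm_def less_imp_le)
  qed
  have sumJ: "(\<Sum>i\<in>J. g i * gram (mons I (k - hdeg (g i))) (mm (mons I (k - hdeg (g i))) (P i) (P i)))
      = g i0 * gram B1 (diagm w) + Poly_Mapping.single 0 \<delta> * q1"
  proof -
    have "(\<Sum>i\<in>J. g i * gram (mons I (k - hdeg (g i))) (mm (mons I (k - hdeg (g i))) (P i) (P i)))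
      = g i0 * gram B1 (mm B1 (P i0) (P i0)) + (\<Sum>i\<in>J - {i0}. g i * gram (mons I (k - hdeg (g i))) (mm (mons I (k - hdeg (g i))) (P i) (P i)))"
      unfolding B1_def k1_def using finJ i0 by (simp add: sum.remove)
    also have "(\<Sum>i\<in>J - {i0}. g i * gram (mons I (k - hdeg (g i))) (mm (mons I (k - hdeg (g i))) (P i) (P i)))
       = (\<Sum>i\<in>J - {i0}. Poly_Mapping.single 0 \<delta> * (g i * gram (mons I (k - hdeg (g i))) (diagm (\<lambda>_. 1))))"
      by (intro sum.cong refl) (simp add: gi mult_ac)
    also have "\<dots> = Poly_Mapping.single 0 \<delta> * q1" unfolding q1_def by (simp add: sum_distrib_left)
    finally show ?thesis using gw by simp
  qed
  have pdP: "\<forall>i\<in>J. posdef (mons I (k - hdeg (g i))) (P i)"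
    using finI wpos \<delta>pos by (auto simp: P_def intro!: posdef_diag finite_mons)
  have "gram B (mm B P0 P0) + (\<Sum>i\<in>J. g i * gram (mons I (k - hdeg (g i))) (mm (mons I (k - hdeg (g i))) (P i) (P i))) = const c"
    unfolding g0 sumJ using ident by (simp add: algebra_simps)
  then show ?thesis using P0pd pdP unfolding B_def by blast
qed




theorem theorem3:
  fixes n m l p :: nat and f :: rpoly and g h :: "nat \<Rightarrow> rpoly"
    and I J W :: "nat \<Rightarrow> nat set"
  assumes f_vars: "in_vars {0..<n} f"
    and g_vars: "\<forall>i<m. in_vars {0..<n} (g i)"
    and h_vars: "\<forall>i<l. in_vars {0..<n} (h i)"
    and I_sub: "\<forall>j<p. I j \<subseteq> {0..<n}"
    and I_maximal: "\<forall>j<p. \<forall>j'<p. I j \<subseteq> I j' \<longrightarrow> j = j'"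
    and J_cover: "(\<Union>j\<in>{0..<p}. J j) = {0..<m}"
    and J_disj: "\<forall>j<p. \<forall>j'<p. j \<noteq> j' \<longrightarrow> J j \<inter> J j' = {}"
    and W_cover: "(\<Union>j\<in>{0..<p}. W j) = {0..<l}"
    and W_disj: "\<forall>j<p. \<forall>j'<p. j \<noteq> j' \<longrightarrow> W j \<inter> W j' = {}"
    and g_loc: "\<forall>j<p. \<forall>i\<in>J j. in_vars (I j) (g i)"
    and h_loc: "\<forall>j<p. \<forall>i\<in>W j. in_vars (I j) (h i)"
    and ball: "\<forall>j<p. \<exists>R>0. \<exists>i<m. g i = const R - (\<Sum>t\<in>I j. (var t)^2)"
  shows "(\<forall>k\<ge>kmin f m g l h. \<forall>j<p. \<forall>c>0. const c \<in> Qcirc k (I j) g (J j))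
         \<and> CTP_cs f m g l h p I J W"
proof -
  have key: "\<exists>P0 P. posdef (mons (I j) k) P0 \<and> (\<forall>i\<in>J j. posdef (mons (I j) (k - hdeg (g i))) (P i)) \<and>
     gram (mons (I j) k) (mm (mons (I j) k) P0 P0) +
     (\<Sum>i\<in>J j. g i * gram (mons (I j) (k - hdeg (g i))) (mm (mons (I j) (k - hdeg (g i))) (P i) (P i))) = const c"
    if k: "k \<ge> kmin f m g l h" and j: "j < p" and c: "c > 0" for k j c
  proof -
    have finI: "finite (I j)" using I_sub j by (meson finite_atLeastLessThan finite_subset)
    have Jsub: "J j \<subseteq> {0..<m}" using J_cover j by auto
    have finJ: "finite (J j)" using Jsub by (rule finite_subset) simp
    obtain R i0 where R: "R > 0" and i0m: "i0 < m" and gi0: "g i0 = const R - (\<Sum>t\<in>I j. (var t)^2)"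
      using ball j by blast
    obtain j' where j': "j' < p" "i0 \<in> J j'" using i0m J_cover by (metis UN_E atLeastLessThan_iff lessThan_atLeast0 lessThan_iff)
    have "in_vars (I j') (g i0)" using g_loc j' by blast
    then have "I j \<subseteq> I j'" using ball_vars[OF finI] gi0 by metis
    then have "j = j'" using I_maximal j j' by blast
    then have i0: "i0 \<in> J j" using j' by simp
    have hd: "\<forall>i\<in>J j. hdeg (g i) \<le> k"
    proof
      fix i assume "i \<in> J j"
      then have "i < m" using Jsub by auto
      then have "hdeg (g i) \<le> kmin f m g l h" unfolding kmin_def by (intro Max_ge) auto
      then show "hdeg (g i) \<le> k" using k by simp
    qed
    have gl: "\<forall>i\<in>J j. in_vars (I j) (g i)" using g_loc j by blast
    show ?thesis by (rule main_rep[OF finI finJ i0 R c gi0 hd gl])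
  qed
  show ?thesis
  proof (intro conjI allI impI)
    fix k j and c :: real assume k: "kmin f m g l h \<le> k" and j: "j < p" and c: "0 < c"
    obtain P0 P where pd0: "posdef (mons (I j) k) P0" and pd: "\<forall>i\<in>J j. posdef (mons (I j) (k - hdeg (g i))) (P i)"
      and eq: "gram (mons (I j) k) (mm (mons (I j) k) P0 P0) +
     (\<Sum>i\<in>J j. g i * gram (mons (I j) (k - hdeg (g i))) (mm (mons (I j) (k - hdeg (g i))) (P i) (P i))) = const c"
      using key[OF k j c] by blast
    have finI: "finite (I j)" using I_sub j by (meson finite_atLeastLessThan finite_subset)
    show "const c \<in> Qcirc k (I j) g (J j)"
      unfolding Qcirc_def
      using eq[symmetric] posdef_sq[OF finite_mons[OF finI] pd0] pd finI
      by (auto intro!: exI[of _ "mm (mons (I j) k) P0 P0"] exI[of _ "\<lambda>i. mm (mons (I j) (k - hdeg (g i))) (P i) (P i)"]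
          posdef_sq finite_mons)
  next
    show "CTP_cs f m g l h p I J W"
      unfolding CTP_cs_def
    proof (intro allI impI)
      fix k j assume k: "kmin f m g l h \<le> k" and j: "j < p"
      obtain P0 P where pd0: "posdef (mons (I j) k) P0" and pd: "\<forall>i\<in>J j. posdef (mons (I j) (k - hdeg (g i))) (P i)"
        and eq: "gram (mons (I j) k) (mm (mons (I j) k) P0 P0) +
       (\<Sum>i\<in>J j. g i * gram (mons (I j) (k - hdeg (g i))) (mm (mons (I j) (k - hdeg (g i))) (P i) (P i))) = const 1"
        using key[OF k j, of 1] by auto
      have finI: "finite (I j)" using I_sub j by (meson finite_atLeastLessThan finite_subset)
      have tr: "trPMP (mons (I j) k) P0 (locmat 1 y) +
          (\<Sum>i\<in>J j. trPMP (mons (I j) (k - hdeg (g i))) (P i) (locmat (g i) y)) = 1" if y0: "y 0 = 1" for y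
      proof -
        have "trPMP (mons (I j) k) P0 (locmat 1 y) = Ly y (1 * gram (mons (I j) k) (mm (mons (I j) k) P0 P0))"
          using pd0 by (intro trace_Ly finite_mons finI) (auto simp: posdef_def)
        moreover have "(\<Sum>i\<in>J j. trPMP (mons (I j) (k - hdeg (g i))) (P i) (locmat (g i) y))
           = (\<Sum>i\<in>J j. Ly y (g i * gram (mons (I j) (k - hdeg (g i))) (mm (mons (I j) (k - hdeg (g i))) (P i) (P i))))"
          using pd by (intro sum.cong refl trace_Ly finite_mons finI) (auto simp: posdef_def)
        ultimately have "trPMP (mons (I j) k) P0 (locmat 1 y) +
          (\<Sum>i\<in>J j. trPMP (mons (I j) (k - hdeg (g i))) (P i) (locmat (g i) y)) = Ly y (const 1)"
          unfolding eq[symmetric] by (simp add: Ly_add Ly_sum)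
        also have "\<dots> = 1" using y0 unfolding const_def Ly_single by simp
        finally show ?thesis .
      qed
      show "\<exists>a>0. \<exists>P0 P. posdef (mons (I j) k) P0 \<and>
          (\<forall>i\<in>J j. posdef (mons (I j) (k - hdeg (g i))) (P i)) \<and>
          (\<forall>y. (\<forall>i\<in>W j. \<forall>\<alpha>\<in>mons (I j) (k - hdeg (h i)). \<forall>\<beta>\<in>mons (I j) (k - hdeg (h i)). locmat (h i) y \<alpha> \<beta> = 0) \<and>
               y 0 = 1 \<longrightarrow>
               trPMP (mons (I j) k) P0 (locmat 1 y) +
               (\<Sum>i\<in>J j. trPMP (mons (I j) (k - hdeg (g i))) (P i) (locmat (g i) y)) = a)"
        using pd0 pd tr by (intro exI[of _ "1::real"] conjI zero_less_one exI[of _ P0] exI[of _ P]) auto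
    qed
  qed
qed



end
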